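(* Let $\sigma:\mathbb{R}\to\mathbb{R}$ be an increasing odd homeomorphism and let $U_\sigma=F_\sigma\circ F_\sigma$. If $p\in\Omega$ is $\sigma$-irrational, then $\|U_\sigma^n(p)\|\leq 2^{-n}\|p\|$ for every $n\geq0$, where $\|(x,y)\|=|x|+|y|$.
   Context: $h_\sigma(x,y)=(x+\sigma^{-1}(y),y)$, $v_\sigma(x,y)=(x,\sigma(x)+y)$, $\Omega=\mathbb{R}^2\setminus\{(0,0)\}$, $X=\{(x,y)\in\Omega:xy\geq0,\ x\neq0\}$, $Y=\{(x,y)\in\Omega:xy\leq0,\ y\neq0\}$, $A=h_\sigma(X)$, $B=v_\sigma(X)$, $C=h_\sigma^{-1}(Y)$, $D=v_\sigma^{-1}(Y)$. The accelerated Euclidean algorithm $F_\sigma$ is defined as follows: if $p\in A$, $F_\sigma(p)=h_\sigma^{-n}(p)$ with $n$ the smallest integer such that $h_\sigma^{-n}(p)\in B$; if $p\in B$, $F_\sigma(p)=v_\sigma^{-n}(p)$ with $n$ the smallest integer such that $v_\sigma^{-n}(p)\in A$; on $Y$ by the analogous formulas (if $p\in C$, $F_\sigma(p)=h_\sigma^{n}(p)$ with $n$ smallest such that $h_\sigma^n(p)\in D$; if $p\in D$, $F_\sigma(p)=v_\sigma^{n}(p)$ with $n$ smallest such that $v_\sigma^n(p)\in C$). The $\sigma$-rational lines are the axes $Ox,Oy$, the sets $m(Ox)$ with $m$ in the monoid generated by $h_\sigma,v_\sigma$, and the sets $m(Oy)$ with $m$ in the monoid generated by $h_\sigma^{-1},v_\sigma^{-1}$;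 a point is $\sigma$-irrational if it lies on none of them. *)

theory Defs
  imports "HOL-Analysis.Analysis"
begin

type_synonym pt = "real \<times> real"

definition hmap :: "(real \<Rightarrow> real) \<Rightarrow> pt \<Rightarrow> pt" where
  "hmap \<sigma> = (\<lambda>(x, y). (x + inv \<sigma> y, y))"
definition hinv :: "(real \<Rightarrow> real) \<Rightarrow> pt \<Rightarrow> pt" where
  "hinv \<sigma> = (\<lambda>(x, y). (x - inv \<sigma> y, y))"
definition vmap :: "(real \<Rightarrow> real) \<Rightarrow> pt \<Rightarrow> pt" where
  "vmap \<sigma> = (\<lambda>(x, y). (x, \<sigma> x + y))"
definition vinv :: "(real \<Rightarrow> real) \<Rightarrow> pt \<Rightarrow> pt" where
  "vinv \<sigma> = (\<lambda>(x, y). (x, y - \<sigma> x))"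

definition Omega :: "pt set" where
  "Omega = UNIV - {(0, 0)}"
definition Xset :: "pt set" where
  "Xset = {(x, y). (x, y) \<in> Omega \<and> x * y \<ge> 0 \<and> x \<noteq> 0}"
definition Yset :: "pt set" where
  "Yset = {(x, y). (x, y) \<in> Omega \<and> x * y \<le> 0 \<and> y \<noteq> 0}"

definition Aset :: "(real \<Rightarrow> real) \<Rightarrow> pt set" where "Aset \<sigma> = hmap \<sigma> ` Xset"
definition Bset :: "(real \<Rightarrow> real) \<Rightarrow> pt set" where "Bset \<sigma> = vmap \<sigma> ` Xset"
definition Cset :: "(real \<Rightarrow> real) \<Rightarrow> pt set" where "Cset \<sigma> = hinv \<sigma> ` Yset"
definition Dset :: "(real \<Rightarrow> real) \<Rightarrow> pt set" where "Dset \<sigma> = vinv \<sigma> ` Yset"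

definition Fmap :: "(real \<Rightarrow> real) \<Rightarrow> pt \<Rightarrow> pt" where
  "Fmap \<sigma> p =
    (if p \<in> Aset \<sigma> then (hinv \<sigma> ^^ (LEAST n. (hinv \<sigma> ^^ n) p \<in> Bset \<sigma>)) p
     else if p \<in> Bset \<sigma> then (vinv \<sigma> ^^ (LEAST n. (vinv \<sigma> ^^ n) p \<in> Aset \<sigma>)) p
     else if p \<in> Cset \<sigma> then (hmap \<sigma> ^^ (LEAST n. (hmap \<sigma> ^^ n) p \<in> Dset \<sigma>)) p
     else if p \<in> Dset \<sigma> then (vmap \<sigma> ^^ (LEAST n. (vmap \<sigma> ^^ n) p \<in> Cset \<sigma>)) p
     else undefined)"

inductive_set mon_hv :: "(real \<Rightarrow> real) \<Rightarrow> (pt \<Rightarrow> pt) set" for \<sigma> where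
  id: "id \<in> mon_hv \<sigma>"
| h: "m \<in> mon_hv \<sigma> \<Longrightarrow> hmap \<sigma> \<circ> m \<in> mon_hv \<sigma>"
| v: "m \<in> mon_hv \<sigma> \<Longrightarrow> vmap \<sigma> \<circ> m \<in> mon_hv \<sigma>"

inductive_set mon_hv_inv :: "(real \<Rightarrow> real) \<Rightarrow> (pt \<Rightarrow> pt) set" for \<sigma> where
  id: "id \<in> mon_hv_inv \<sigma>"
| h: "m \<in> mon_hv_inv \<sigma> \<Longrightarrow> hinv \<sigma> \<circ> m \<in> mon_hv_inv \<sigma>"
| v: "m \<in> mon_hv_inv \<sigma> \<Longrightarrow> vinv \<sigma> \<circ> m \<in> mon_hv_inv \<sigma>"

definition Ox :: "pt set" where "Ox = {(x, 0) | x. True}"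
definition Oy :: "pt set" where "Oy = {(0, y) | y. True}"

definition rational_lines :: "(real \<Rightarrow> real) \<Rightarrow> pt set set" where
  "rational_lines \<sigma> = {Ox, Oy} \<union> {m ` Ox | m. m \<in> mon_hv \<sigma>} \<union> {m ` Oy | m. m \<in> mon_hv_inv \<sigma>}"

definition sigma_irrational :: "(real \<Rightarrow> real) \<Rightarrow> pt \<Rightarrow> bool" where
  "sigma_irrational \<sigma> p \<longleftrightarrow> (\<forall>L \<in> rational_lines \<sigma>. p \<notin> L)"

definition norm1 :: "pt \<Rightarrow> real" where
  "norm1 = (\<lambda>(x, y). \<bar>x\<bar> + \<bar>y\<bar>)"

end

theory Submission
  imports Defs
begin


locale sig =
  fixes \<sigma> :: "real \<Rightarrow> real"
  assumes sm: "strict_mono \<sigma>" and odd: "\<And>x. \<sigma> (- x) = - \<sigma> x" and bj: "bij \<sigma>"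
begin

lemma s0: "\<sigma> 0 = 0" using odd[of 0] by simp
lemma inv1: "\<sigma> (inv \<sigma> y) = y" using bj by (simp add: bij_is_surj surj_f_inv_f)
lemma inv2: "inv \<sigma> (\<sigma> x) = x" using bj by (simp add: bij_is_inj)
lemma sless: "\<sigma> x < \<sigma> y \<longleftrightarrow> x < y" using sm by (simp add: strict_mono_less)
lemma sle: "\<sigma> x \<le> \<sigma> y \<longleftrightarrow> x \<le> y" using sm by (simp add: strict_mono_less_eq)
lemma spos: "0 < \<sigma> x \<longleftrightarrow> 0 < x" using sless[of 0 x] s0 by simp
lemma sneg: "\<sigma> x < 0 \<longleftrightarrow> x < 0" using sless[of x 0] s0 by simp
lemma szero: "\<sigma> x = 0 \<longleftrightarrow> x = 0" using spos[of x] sneg[of x] s0 by (cases x "0::real" rule: linorder_cases) auto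
lemma ipos: "0 < inv \<sigma> y \<longleftrightarrow> 0 < y" using spos[of "inv \<sigma> y"] inv1 by simp
lemma ineg: "inv \<sigma> y < 0 \<longleftrightarrow> y < 0" using sneg[of "inv \<sigma> y"] inv1 by simp
lemma izero: "inv \<sigma> y = 0 \<longleftrightarrow> y = 0" using szero[of "inv \<sigma> y"] inv1 by simp
lemma smul: "0 \<le> x * \<sigma> x"
proof (cases x "0::real" rule: linorder_cases)
  case less then have "\<sigma> x < 0" using sneg by simp
  then show ?thesis using less by (simp add: mult_nonpos_nonpos)
next
  case equal then show ?thesis by simp
next
  case greater then have "\<sigma> x > 0" using spos by simp
  then show ?thesis using greater by simp
qed
lemma imul: "0 \<le> y * inv \<sigma> y"
proof (cases y "0::real" rule: linorder_cases)
  case less then have "inv \<sigma> y < 0" using ineg by simp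
  then show ?thesis using less by (simp add: mult_nonpos_nonpos)
next
  case equal then show ?thesis by simp
next
  case greater then have "inv \<sigma> y > 0" using ipos by simp
  then show ?thesis using greater by simp
qed

lemma hinv_pow: "(hinv \<sigma> ^^ k) (a,b) = (a - real k * inv \<sigma> b, b)"
  by (induction k) (auto simp: hinv_def algebra_simps)
lemma hmap_pow: "(hmap \<sigma> ^^ k) (a,b) = (a + real k * inv \<sigma> b, b)"
  by (induction k) (auto simp: hmap_def algebra_simps)
lemma vinv_pow: "(vinv \<sigma> ^^ k) (a,b) = (a, b - real k * \<sigma> a)"
  by (induction k) (auto simp: vinv_def algebra_simps)
lemma vmap_pow: "(vmap \<sigma> ^^ k) (a,b) = (a, b + real k * \<sigma> a)"
  by (induction k) (auto simp: vmap_def algebra_simps)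

lemma img_inv: assumes "\<And>q. f (g q) = q" "\<And>q. g (f q) = q" shows "q \<in> f ` S \<longleftrightarrow> g q \<in> S"
  proof
  assume "q \<in> f ` S" then obtain z where "z \<in> S" "q = f z" by blast
  then show "g q \<in> S" using assms by simp
next
  assume "g q \<in> S" then have "f (g q) \<in> f ` S" by blast
  then show "q \<in> f ` S" using assms by simp
qed

lemma X_char: "(x,y) \<in> Xset \<longleftrightarrow> x \<noteq> 0 \<and> 0 \<le> x * y" by (auto simp: Xset_def Omega_def)
lemma Y_char: "(x,y) \<in> Yset \<longleftrightarrow> y \<noteq> 0 \<and> x * y \<le> 0" by (auto simp: Yset_def Omega_def)

lemma A_char: "(a,b) \<in> Aset \<sigma> \<longleftrightarrow> (0 \<le> b \<and> b < \<sigma> a) \<or> (\<sigma> a < b \<and> b \<le> 0)"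
proof -
  have "(a,b) \<in> Aset \<sigma> \<longleftrightarrow> hinv \<sigma> (a,b) \<in> Xset" unfolding Aset_def
    by (rule img_inv) (auto simp: hmap_def hinv_def)
  also have "\<dots> \<longleftrightarrow> a - inv \<sigma> b \<noteq> 0 \<and> 0 \<le> (a - inv \<sigma> b) * b" by (simp add: hinv_def X_char)
  also have "\<dots> \<longleftrightarrow> (0 \<le> b \<and> b < \<sigma> a) \<or> (\<sigma> a < b \<and> b \<le> 0)"
  proof (cases b "0::real" rule: linorder_cases)
    case less
    have 1: "\<sigma> a < b \<longleftrightarrow> a < inv \<sigma> b" using sless[of a "inv \<sigma> b"] inv1 by simp
    have 2: "0 \<le> (a - inv \<sigma> b) * b \<longleftrightarrow> a - inv \<sigma> b \<le> 0" using less by (simp add: zero_le_mult_iff)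
    show ?thesis unfolding 2 using 1 less by linarith
  next
    case equal
    have "a \<noteq> 0 \<longleftrightarrow> (0 < \<sigma> a \<or> \<sigma> a < 0)" using spos sneg by auto
    then show ?thesis using equal izero[of 0] by simp
  next
    case greater
    have 1: "\<sigma> a > b \<longleftrightarrow> a > inv \<sigma> b" using sless[of "inv \<sigma> b" a] inv1 by simp
    have 2: "0 \<le> (a - inv \<sigma> b) * b \<longleftrightarrow> a - inv \<sigma> b \<ge> 0" using greater by (simp add: zero_le_mult_iff)
    show ?thesis unfolding 2 using 1 greater by linarith
  qed
  finally show ?thesis .
qed

lemma B_char: "(a,b) \<in> Bset \<sigma> \<longleftrightarrow> (0 < a \<and> \<sigma> a \<le> b) \<or> (a < 0 \<and> b \<le> \<sigma> a)"
proof -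
  have "(a,b) \<in> Bset \<sigma> \<longleftrightarrow> vinv \<sigma> (a,b) \<in> Xset" unfolding Bset_def
    by (rule img_inv) (auto simp: vmap_def vinv_def)
  also have "\<dots> \<longleftrightarrow> a \<noteq> 0 \<and> 0 \<le> a * (b - \<sigma> a)" by (simp add: vinv_def X_char)
  also have "\<dots> \<longleftrightarrow> (0 < a \<and> \<sigma> a \<le> b) \<or> (a < 0 \<and> b \<le> \<sigma> a)"
    by (cases a "0::real" rule: linorder_cases) (simp_all add: zero_le_mult_iff)
  finally show ?thesis .
qed

lemma C_char: "(a,b) \<in> Cset \<sigma> \<longleftrightarrow> (0 < b \<and> b \<le> - \<sigma> a) \<or> (- \<sigma> a \<le> b \<and> b < 0)"
proof -
  have "(a,b) \<in> Cset \<sigma> \<longleftrightarrow> hmap \<sigma> (a,b) \<in> Yset" unfolding Cset_def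
    by (rule img_inv) (auto simp: hmap_def hinv_def)
  also have "\<dots> \<longleftrightarrow> b \<noteq> 0 \<and> (a + inv \<sigma> b) * b \<le> 0" by (simp add: hmap_def Y_char)
  also have "\<dots> \<longleftrightarrow> (0 < b \<and> b \<le> - \<sigma> a) \<or> (- \<sigma> a \<le> b \<and> b < 0)"
  proof (cases b "0::real" rule: linorder_cases)
    case less
    have 1: "- \<sigma> a \<le> b \<longleftrightarrow> - a \<le> inv \<sigma> b" using sle[of "- a" "inv \<sigma> b"] inv1 odd[of a] by simp
    have 2: "(a + inv \<sigma> b) * b \<le> 0 \<longleftrightarrow> a + inv \<sigma> b \<ge> 0" using less by (simp add: mult_le_0_iff)
    show ?thesis unfolding 2 using 1 less by linarith
  next
    case equal
    then show ?thesis by simp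
  next
    case greater
    have 1: "b \<le> - \<sigma> a \<longleftrightarrow> inv \<sigma> b \<le> - a" using sle[of "inv \<sigma> b" "- a"] inv1 odd[of a] by simp
    have 2: "(a + inv \<sigma> b) * b \<le> 0 \<longleftrightarrow> a + inv \<sigma> b \<le> 0" using greater by (simp add: mult_le_0_iff)
    show ?thesis unfolding 2 using 1 greater by linarith
  qed
  finally show ?thesis .
qed

lemma D_char: "(a,b) \<in> Dset \<sigma> \<longleftrightarrow> (a \<le> 0 \<and> - \<sigma> a < b) \<or> (0 \<le> a \<and> b < - \<sigma> a)"
proof -
  have "(a,b) \<in> Dset \<sigma> \<longleftrightarrow> vmap \<sigma> (a,b) \<in> Yset" unfolding Dset_def
    by (rule img_inv) (auto simp: vmap_def vinv_def)
  also have "\<dots> \<longleftrightarrow> \<sigma> a + b \<noteq> 0 \<and> a * (\<sigma> a + b) \<le> 0" by (simp add: vmap_def Y_char)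
  also have "\<dots> \<longleftrightarrow> (a \<le> 0 \<and> - \<sigma> a < b) \<or> (0 \<le> a \<and> b < - \<sigma> a)"
    by (cases a "0::real" rule: linorder_cases) (auto simp: s0 mult_le_0_iff)
  finally show ?thesis .
qed

end



lemma euclid_le:
  fixes t d :: real assumes d0: "0 < d" and dt: "d < t"
  shows "\<exists>n\<ge>1. 0 < t - real n * d \<and> t - real n * d \<le> d \<and> t - real n * d \<le> t - d \<and> (\<forall>k<n. d < t - real k * d)"
proof -
  obtain N :: nat where N: "t / d < real N" using reals_Archimedean2 by blast
  then have "t < real N * d" using d0 by (simp add: pos_divide_less_eq)
  then have PN: "t - real N * d \<le> d" using d0 by linarith
  define n where "n = (LEAST n. t - real n * d \<le> d)"
  have P: "t - real n * d \<le> d" unfolding n_def by (rule LeastI[of _ N]) (rule PN)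
  have Q: "\<forall>k<n. d < t - real k * d"
  proof (intro allI impI)
    fix k assume "k < n"
    then have "\<not> (t - real k * d \<le> d)" unfolding n_def by (rule not_less_Least)
    then show "d < t - real k * d" by simp
  qed
  have n1: "n \<ge> 1" using P dt by (cases n) auto
  then have "n - 1 < n" by simp
  then have "d < t - real (n - 1) * d" using Q by blast
  moreover have "real (n - 1) = real n - 1" using n1 by simp
  ultimately have pos: "0 < t - real n * d" by (simp add: algebra_simps)
  have "d \<le> real n * d" using n1 d0 by simp
  then show ?thesis using n1 pos P Q by (intro exI[of _ n]) auto
qed

lemma euclid_lt:
  fixes t d :: real assumes d0: "0 < d" and dt: "d \<le> t"
  shows "\<exists>n\<ge>1. 0 \<le> t - real n * d \<and> t - real n * d < d \<and> t - real n * d \<le> t - d \<and> (\<forall>k<n. d \<le> t - real k * d)"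
proof -
  obtain N :: nat where N: "t / d < real N" using reals_Archimedean2 by blast
  then have "t < real N * d" using d0 by (simp add: pos_divide_less_eq)
  then have PN: "t - real N * d < d" using d0 by linarith
  define n where "n = (LEAST n. t - real n * d < d)"
  have P: "t - real n * d < d" unfolding n_def by (rule LeastI[of _ N]) (rule PN)
  have Q: "\<forall>k<n. d \<le> t - real k * d"
  proof (intro allI impI)
    fix k assume "k < n"
    then have "\<not> (t - real k * d < d)" unfolding n_def by (rule not_less_Least)
    then show "d \<le> t - real k * d" by simp
  qed
  have n1: "n \<ge> 1" using P dt by (cases n) auto
  then have "n - 1 < n" by simp
  then have "d \<le> t - real (n - 1) * d" using Q by blast
  moreover have "real (n - 1) = real n - 1" using n1 by simp
  ultimately have pos: "0 \<le> t - real n * d" by (simp add: algebra_simps)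
  have "d \<le> real n * d" using n1 d0 by simp
  then show ?thesis using n1 pos P Q by (intro exI[of _ n]) auto
qed

lemma least_eq: fixes n :: nat assumes "P n" "\<And>k. k < n \<Longrightarrow> \<not> P k" shows "(LEAST k. P k) = n"
proof (rule Least_equality)
  show "P n" by fact
next
  fix y assume "P y" then show "n \<le> y" using assms(2) not_le by blast
qed

lemma pow_clos: assumes "\<And>m. m \<in> M \<Longrightarrow> f \<circ> m \<in> M" "m \<in> M" shows "(f ^^ n) \<circ> m \<in> M"
proof (induction n)
  case 0 then show ?case using assms(2) by simp
next
  case (Suc n)
  have e: "(f ^^ Suc n) \<circ> m = f \<circ> ((f ^^ n) \<circ> m)" by (simp add: comp_assoc)
  show ?case unfolding e by (rule assms(1)[OF Suc])
qed

lemma norm1_eq: "norm1 q = \<bar>fst q\<bar> + \<bar>snd q\<bar>" by (cases q) (simp add: norm1_def)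

context sig begin

lemma hmap_X0: assumes "q \<in> Xset \<union> {(0,0)}" shows "hmap \<sigma> q \<in> Xset \<union> {(0,0)}"
proof -
  obtain x y where q: "q = (x,y)" by (cases q)
  show ?thesis
  proof (cases "q = (0,0)")
    case True then show ?thesis by (simp add: hmap_def izero)
  next
    case False
    then have x0: "x \<noteq> 0" and xy: "0 \<le> x * y" using assms q by (auto simp: X_char)
    have sy: "0 \<le> y * inv \<sigma> y" by (rule imul)
    have "x + inv \<sigma> y \<noteq> 0"
    proof
      assume h: "x + inv \<sigma> y = 0"
      then have "x = - inv \<sigma> y" by linarith
      then have "x * y = - (y * inv \<sigma> y)" by (simp add: algebra_simps)
      then have "y * inv \<sigma> y = 0" using xy sy by linarith
      then have "inv \<sigma> y = 0" using izero by auto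
      then show False using h x0 by simp
    qed
    moreover have "0 \<le> (x + inv \<sigma> y) * y" using xy sy by (simp add: algebra_simps)
    ultimately show ?thesis using q by (simp add: hmap_def X_char)
  qed
qed

lemma vmap_X0: assumes "q \<in> Xset \<union> {(0,0)}" shows "vmap \<sigma> q \<in> Xset \<union> {(0,0)}"
proof -
  obtain x y where q: "q = (x,y)" by (cases q)
  show ?thesis
  proof (cases "q = (0,0)")
    case True then show ?thesis by (simp add: vmap_def s0)
  next
    case False
    then have x0: "x \<noteq> 0" and xy: "0 \<le> x * y" using assms q by (auto simp: X_char)
    have "0 \<le> x * (\<sigma> x + y)" using xy smul[of x] by (simp add: algebra_simps)
    then show ?thesis using q x0 by (simp add: vmap_def X_char)
  qed
qed

lemma hinv_Y0: assumes "q \<in> Yset \<union> {(0,0)}" shows "hinv \<sigma> q \<in> Yset \<union> {(0,0)}"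
proof -
  obtain x y where q: "q = (x,y)" by (cases q)
  show ?thesis
  proof (cases "q = (0,0)")
    case True then show ?thesis by (simp add: hinv_def izero)
  next
    case False
    then have y0: "y \<noteq> 0" and xy: "x * y \<le> 0" using assms q by (auto simp: Y_char)
    have "(x - inv \<sigma> y) * y \<le> 0" using xy imul[of y] by (simp add: algebra_simps)
    then show ?thesis using q y0 by (simp add: hinv_def Y_char)
  qed
qed

lemma vinv_Y0: assumes "q \<in> Yset \<union> {(0,0)}" shows "vinv \<sigma> q \<in> Yset \<union> {(0,0)}"
proof -
  obtain x y where q: "q = (x,y)" by (cases q)
  show ?thesis
  proof (cases "q = (0,0)")
    case True then show ?thesis by (simp add: vinv_def s0)
  next
    case False
    then have y0: "y \<noteq> 0" and xy: "x * y \<le> 0" using assms q by (auto simp: Y_char)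
    have sx: "0 \<le> x * \<sigma> x" by (rule smul)
    have "y - \<sigma> x \<noteq> 0"
    proof
      assume h: "y - \<sigma> x = 0"
      then have "x * y = x * \<sigma> x" by simp
      then have "x * \<sigma> x = 0" using xy sx by linarith
      then have "x = 0" using szero by auto
      then show False using h y0 s0 by simp
    qed
    moreover have "x * (y - \<sigma> x) \<le> 0" using xy sx by (simp add: algebra_simps)
    ultimately show ?thesis using q by (simp add: vinv_def Y_char)
  qed
qed

lemma mon_hv_X0: "m \<in> mon_hv \<sigma> \<Longrightarrow> q \<in> Xset \<union> {(0,0)} \<Longrightarrow> m q \<in> Xset \<union> {(0,0)}"
proof (induction m rule: mon_hv.induct)
  case id then show ?case by simp
next
  case (h m) then show ?case using hmap_X0 by (metis comp_apply)
next
  case (v m) then show ?case using vmap_X0 by (metis comp_apply)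
qed

lemma mon_hv_inv_Y0: "m \<in> mon_hv_inv \<sigma> \<Longrightarrow> q \<in> Yset \<union> {(0,0)} \<Longrightarrow> m q \<in> Yset \<union> {(0,0)}"
proof (induction m rule: mon_hv_inv.induct)
  case id then show ?case by simp
next
  case (h m) then show ?case using hinv_Y0 by (metis comp_apply)
next
  case (v m) then show ?case using vinv_Y0 by (metis comp_apply)
qed

lemma Ox_X0: "z \<in> Ox \<Longrightarrow> z \<in> Xset \<union> {(0,0)}" by (auto simp: Ox_def X_char)
lemma Oy_Y0: "z \<in> Oy \<Longrightarrow> z \<in> Yset \<union> {(0,0)}" by (auto simp: Oy_def Y_char)

lemma X_notY0: "q \<in> Xset \<Longrightarrow> q \<notin> Yset \<union> {(0,0)}"
  by (cases q) (auto simp: X_char Y_char)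
lemma Y_notX0: "q \<in> Yset \<Longrightarrow> q \<notin> Xset \<union> {(0,0)}"
  by (cases q) (auto simp: X_char Y_char)

lemma irr_axes: assumes "sigma_irrational \<sigma> (a,b)" shows "a \<noteq> 0" "b \<noteq> 0"
proof -
  have "Ox \<in> rational_lines \<sigma>" "Oy \<in> rational_lines \<sigma>" unfolding rational_lines_def by blast+
  then have "(a,b) \<notin> Ox" "(a,b) \<notin> Oy" using assms unfolding sigma_irrational_def by blast+
  then show "a \<noteq> 0" "b \<noteq> 0" unfolding Ox_def Oy_def by blast+
qed

lemma rl_cases: assumes L: "L \<in> rational_lines \<sigma>" shows "L = Ox \<or> L = Oy \<or> (\<exists>m. m \<in> mon_hv \<sigma> \<and> L = m ` Ox) \<or> (\<exists>m. m \<in> mon_hv_inv \<sigma> \<and> L = m ` Oy)"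
  using L unfolding rational_lines_def by blast
lemma rl_Ox: assumes "m \<in> mon_hv \<sigma>" shows "m ` Ox \<in> rational_lines \<sigma>"
  using assms unfolding rational_lines_def by blast
lemma rl_Oy: assumes "m \<in> mon_hv_inv \<sigma>" shows "m ` Oy \<in> rational_lines \<sigma>"
  using assms unfolding rational_lines_def by blast
lemma irr_notin: "sigma_irrational \<sigma> p \<Longrightarrow> L \<in> rational_lines \<sigma> \<Longrightarrow> p \<notin> L"
  unfolding sigma_irrational_def by blast

lemma pres_X:
  assumes clos: "\<And>m. m \<in> mon_hv \<sigma> \<Longrightarrow> f \<circ> m \<in> mon_hv \<sigma>" and q: "q \<in> Xset"
    and irr: "sigma_irrational \<sigma> ((f ^^ n) q)"
  shows "sigma_irrational \<sigma> q"
  unfolding sigma_irrational_def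
proof (intro ballI notI)
  fix L assume L: "L \<in> rational_lines \<sigma>" and qL: "q \<in> L"
  have irr': "(f ^^ n) q \<notin> ((f ^^ n) \<circ> m) ` Ox" if "m \<in> mon_hv \<sigma>" for m
    using irr_notin[OF irr rl_Ox[OF pow_clos[of "mon_hv \<sigma>" f m n, OF clos that]]] by simp
  have q0: "q \<notin> Yset \<union> {(0,0)}" using X_notY0[OF q] .
  have fst0: "fst q \<noteq> 0" using q by (cases q) (simp add: X_char)
  show False using rl_cases[OF L]
  proof (elim disjE exE conjE)
    assume "L = Ox" then have "q \<in> id ` Ox" using qL by simp
    then show False using irr'[OF mon_hv.id] by auto
  next
    assume "L = Oy" then show False using qL fst0 unfolding Oy_def by auto
  next
    fix m assume m: "m \<in> mon_hv \<sigma>" and "L = m ` Ox"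
    then obtain z where z: "z \<in> Ox" "q = m z" using qL by blast
    have "(f ^^ n) q \<in> ((f ^^ n) \<circ> m) ` Ox" using z by simp
    then show False using irr'[OF m] by blast
  next
    fix m assume m: "m \<in> mon_hv_inv \<sigma>" and "L = m ` Oy"
    then obtain z where z: "z \<in> Oy" "q = m z" using qL by blast
    have "m z \<in> Yset \<union> {(0,0)}" by (rule mon_hv_inv_Y0[OF m Oy_Y0[OF z(1)]])
    then show False using q0 z(2) by simp
  qed
qed

lemma pres_Y:
  assumes clos: "\<And>m. m \<in> mon_hv_inv \<sigma> \<Longrightarrow> f \<circ> m \<in> mon_hv_inv \<sigma>" and q: "q \<in> Yset"
    and irr: "sigma_irrational \<sigma> ((f ^^ n) q)"
  shows "sigma_irrational \<sigma> q"
  unfolding sigma_irrational_def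
proof (intro ballI notI)
  fix L assume L: "L \<in> rational_lines \<sigma>" and qL: "q \<in> L"
  have irr': "(f ^^ n) q \<notin> ((f ^^ n) \<circ> m) ` Oy" if "m \<in> mon_hv_inv \<sigma>" for m
    using irr_notin[OF irr rl_Oy[OF pow_clos[of "mon_hv_inv \<sigma>" f m n, OF clos that]]] by simp
  have q0: "q \<notin> Xset \<union> {(0,0)}" using Y_notX0[OF q] .
  have snd0: "snd q \<noteq> 0" using q by (cases q) (simp add: Y_char)
  show False using rl_cases[OF L]
  proof (elim disjE exE conjE)
    assume "L = Ox" then show False using qL snd0 unfolding Ox_def by auto
  next
    assume "L = Oy" then have "q \<in> id ` Oy" using qL by simp
    then show False using irr'[OF mon_hv_inv.id] by auto
  next
    fix m assume m: "m \<in> mon_hv \<sigma>" and "L = m ` Ox"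
    then obtain z where z: "z \<in> Ox" "q = m z" using qL by blast
    have "m z \<in> Xset \<union> {(0,0)}" by (rule mon_hv_X0[OF m Ox_X0[OF z(1)]])
    then show False using q0 z(2) by simp
  next
    fix m assume m: "m \<in> mon_hv_inv \<sigma>" and "L = m ` Oy"
    then obtain z where z: "z \<in> Oy" "q = m z" using qL by blast
    have "(f ^^ n) q \<in> ((f ^^ n) \<circ> m) ` Oy" using z by simp
    then show False using irr'[OF m] by blast
  qed
qed

lemma sgn_facts: "0 < a \<Longrightarrow> 0 < \<sigma> a" "a < 0 \<Longrightarrow> \<sigma> a < 0" "0 \<le> a \<Longrightarrow> 0 \<le> \<sigma> a" "a \<le> 0 \<Longrightarrow> \<sigma> a \<le> 0"
proof -
  show "0 < a \<Longrightarrow> 0 < \<sigma> a" using spos[of a] by blast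
  show "a < 0 \<Longrightarrow> \<sigma> a < 0" using sneg[of a] by blast
  show "0 \<le> a \<Longrightarrow> 0 \<le> \<sigma> a" using sle[of 0 a] unfolding s0 by blast
  show "a \<le> 0 \<Longrightarrow> \<sigma> a \<le> 0" using sle[of a 0] unfolding s0 by blast
qed

lemma A_X: assumes "q \<in> Aset \<sigma>" shows "q \<in> Xset"
proof -
  obtain a b where q: "q = (a,b)" by (cases q)
  have "(0 \<le> b \<and> b < \<sigma> a) \<or> (\<sigma> a < b \<and> b \<le> 0)" using assms unfolding q A_char .
  then have "a \<noteq> 0 \<and> 0 \<le> a * b"
  proof
    assume h: "0 \<le> b \<and> b < \<sigma> a"
    then have "0 < a" using spos[of a] by linarith
    then show ?thesis using h by simp
  next
    assume h: "\<sigma> a < b \<and> b \<le> 0"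
    then have "a < 0" using sneg[of a] by linarith
    then show ?thesis using h by (simp add: mult_nonpos_nonpos)
  qed
  then show ?thesis unfolding q X_char .
qed

lemma B_X: assumes "q \<in> Bset \<sigma>" shows "q \<in> Xset"
proof -
  obtain a b where q: "q = (a,b)" by (cases q)
  have "(0 < a \<and> \<sigma> a \<le> b) \<or> (a < 0 \<and> b \<le> \<sigma> a)" using assms unfolding q B_char .
  then have "a \<noteq> 0 \<and> 0 \<le> a * b"
  proof
    assume h: "0 < a \<and> \<sigma> a \<le> b"
    then have "0 < b" using spos[of a] by linarith
    then show ?thesis using h by simp
  next
    assume h: "a < 0 \<and> b \<le> \<sigma> a"
    then have "b < 0" using sneg[of a] by linarith
    then show ?thesis using h by (simp add: mult_nonpos_nonpos)
  qed
  then show ?thesis unfolding q X_char .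
qed

lemma C_Y: assumes "q \<in> Cset \<sigma>" shows "q \<in> Yset"
proof -
  obtain a b where q: "q = (a,b)" by (cases q)
  have "(0 < b \<and> b \<le> - \<sigma> a) \<or> (- \<sigma> a \<le> b \<and> b < 0)" using assms unfolding q C_char .
  then have "b \<noteq> 0 \<and> a * b \<le> 0"
  proof
    assume h: "0 < b \<and> b \<le> - \<sigma> a"
    then have "a < 0" using sneg[of a] by linarith
    then show ?thesis using h by (simp add: mult_nonpos_nonneg)
  next
    assume h: "- \<sigma> a \<le> b \<and> b < 0"
    then have "0 < a" using spos[of a] by linarith
    then show ?thesis using h by (simp add: mult_nonneg_nonpos)
  qed
  then show ?thesis unfolding q Y_char .
qed

lemma D_Y: assumes "q \<in> Dset \<sigma>" shows "q \<in> Yset"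
proof -
  obtain a b where q: "q = (a,b)" by (cases q)
  have "(a \<le> 0 \<and> - \<sigma> a < b) \<or> (0 \<le> a \<and> b < - \<sigma> a)" using assms unfolding q D_char .
  then have "b \<noteq> 0 \<and> a * b \<le> 0"
  proof
    assume h: "a \<le> 0 \<and> - \<sigma> a < b"
    then have "\<sigma> a \<le> 0" using sgn_facts(4) by blast
    then have "0 < b" using h by linarith
    then show ?thesis using h by (simp add: mult_nonpos_nonneg)
  next
    assume h: "0 \<le> a \<and> b < - \<sigma> a"
    then have "0 \<le> \<sigma> a" using sgn_facts(3) by blast
    then have "b < 0" using h by linarith
    then show ?thesis using h by (simp add: mult_nonneg_nonpos)
  qed
  then show ?thesis unfolding q Y_char .
qed

lemma AB_disj: assumes "q \<in> Aset \<sigma>" shows "q \<notin> Bset \<sigma>"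
proof -
  obtain a b where q: "q = (a,b)" by (cases q)
  have "(0 \<le> b \<and> b < \<sigma> a) \<or> (\<sigma> a < b \<and> b \<le> 0)" using assms q A_char by simp
  moreover have "0 < a \<Longrightarrow> 0 < \<sigma> a" "a < 0 \<Longrightarrow> \<sigma> a < 0" using spos sneg by auto
  ultimately have "\<not> ((0 < a \<and> \<sigma> a \<le> b) \<or> (a < 0 \<and> b \<le> \<sigma> a))" by linarith
  then show ?thesis using q B_char by simp
qed
lemma CD_disj: assumes "q \<in> Cset \<sigma>" shows "q \<notin> Dset \<sigma>"
proof -
  obtain a b where q: "q = (a,b)" by (cases q)
  have "(0 < b \<and> b \<le> - \<sigma> a) \<or> (- \<sigma> a \<le> b \<and> b < 0)" using assms q C_char by simp
  moreover have "0 \<le> a \<Longrightarrow> 0 \<le> \<sigma> a" "a \<le> 0 \<Longrightarrow> \<sigma> a \<le> 0" using sgn_facts by auto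
  ultimately have "\<not> ((a \<le> 0 \<and> - \<sigma> a < b) \<or> (0 \<le> a \<and> b < - \<sigma> a))" by linarith
  then show ?thesis using q D_char by simp
qed
lemma XY_disj: "q \<in> Xset \<Longrightarrow> q \<notin> Yset"
  using X_notY0 by blast

end


context sig begin

lemma branchA:
  assumes pA: "p \<in> Aset \<sigma>" and irr: "sigma_irrational \<sigma> p"
  shows "Fmap \<sigma> p \<in> Bset \<sigma> \<and> sigma_irrational \<sigma> (Fmap \<sigma> p) \<and> snd (Fmap \<sigma> p) = snd p \<and> \<bar>fst (Fmap \<sigma> p)\<bar> \<le> \<bar>fst p\<bar> / 2"
proof -
  obtain a b where p: "p = (a,b)" by (cases p)
  have b0: "b \<noteq> 0" using irr_axes irr p by blast
  have Ac: "(0 \<le> b \<and> b < \<sigma> a) \<or> (\<sigma> a < b \<and> b \<le> 0)" using pA unfolding p A_char .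
  define d where "d = inv \<sigma> b"
  have sd: "\<sigma> d = b" unfolding d_def by (rule inv1)
  have pw: "\<And>k. (hinv \<sigma> ^^ k) p = (a - real k * d, b)" using p hinv_pow d_def by simp
  have "\<exists>n. (hinv \<sigma> ^^ n) p \<in> Bset \<sigma> \<and> (\<forall>k<n. (hinv \<sigma> ^^ k) p \<notin> Bset \<sigma>) \<and> \<bar>a - real n * d\<bar> \<le> \<bar>a\<bar> / 2"
  proof (cases "b > 0")
    case True
    have d0: "0 < d" using True ipos d_def by simp
    have "\<sigma> d < \<sigma> a" using Ac True sd by linarith
    then have da: "d < a" using sless by blast
    obtain n where n: "n \<ge> 1" "0 < a - real n * d" "a - real n * d \<le> d" "a - real n * d \<le> a - d"
        "\<forall>k<n. d < a - real k * d" using euclid_le[OF d0 da] by blast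
    show ?thesis
    proof (intro exI conjI allI impI)
      have "\<sigma> (a - real n * d) \<le> b" using n(3) sle sd by metis
      then show "(hinv \<sigma> ^^ n) p \<in> Bset \<sigma>" unfolding pw B_char using n(2) by blast
      show "(hinv \<sigma> ^^ k) p \<notin> Bset \<sigma>" if "k < n" for k
      proof -
        have k: "d < a - real k * d" using n(5) that by blast
        then have "b < \<sigma> (a - real k * d)" using sless sd by metis
        then show ?thesis unfolding pw B_char using k d0 by linarith
      qed
      show "\<bar>a - real n * d\<bar> \<le> \<bar>a\<bar> / 2" using n(2,3,4) da d0 by linarith
    qed
  next
    case False
    with b0 have bn: "b < 0" by simp
    have d0: "d < 0" using bn ineg d_def by simp
    have "\<sigma> a < \<sigma> d" using Ac bn sd by linarith
    then have da: "a < d" using sless by blast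
    have d0': "0 < - d" and da': "- d < - a" using d0 da by linarith+
    obtain n where n: "n \<ge> 1" "0 < - a - real n * - d" "- a - real n * - d \<le> - d" "- a - real n * - d \<le> - a - - d"
        "\<forall>k<n. - d < - a - real k * - d" using euclid_le[OF d0' da'] by blast
    show ?thesis
    proof (intro exI conjI allI impI)
      have "d \<le> a - real n * d" using n(3) by simp
      then have "b \<le> \<sigma> (a - real n * d)" using sle sd by metis
      moreover have "a - real n * d < 0" using n(2) by simp
      ultimately show "(hinv \<sigma> ^^ n) p \<in> Bset \<sigma>" unfolding pw B_char by blast
      show "(hinv \<sigma> ^^ k) p \<notin> Bset \<sigma>" if "k < n" for k
      proof -
        have "- d < - a - real k * - d" using n(5) that by blast
        then have k: "a - real k * d < d" by simp
        then have "\<sigma> (a - real k * d) < b" using sless sd by metis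
        then show ?thesis unfolding pw B_char using k d0 by linarith
      qed
      define t where "t = - a - real n * - d"
      have "a - real n * d = - t" unfolding t_def by simp
      moreover have "\<bar>- t\<bar> = t" using n(2) unfolding t_def by simp
      moreover have "\<bar>a\<bar> = - a" using da d0 by simp
      moreover have "t \<le> - d" "t \<le> - a - - d" using n(3,4) unfolding t_def by blast+
      ultimately show "\<bar>a - real n * d\<bar> \<le> \<bar>a\<bar> / 2" by linarith
    qed
  qed
  then obtain n where n: "(hinv \<sigma> ^^ n) p \<in> Bset \<sigma>" "\<And>k. k < n \<Longrightarrow> (hinv \<sigma> ^^ k) p \<notin> Bset \<sigma>"
    "\<bar>a - real n * d\<bar> \<le> \<bar>a\<bar> / 2" by blast
  have L: "(LEAST k. (hinv \<sigma> ^^ k) p \<in> Bset \<sigma>) = n" by (rule least_eq) (use n in auto)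
  have F: "Fmap \<sigma> p = (hinv \<sigma> ^^ n) p" unfolding Fmap_def L using pA by simp
  have "(hmap \<sigma> ^^ n) (a - real n * d, b) = (a, b)" by (simp add: hmap_pow d_def)
  then have bk: "(hmap \<sigma> ^^ n) (Fmap \<sigma> p) = p" using F pw p by simp
  have irrF: "sigma_irrational \<sigma> (Fmap \<sigma> p)"
    by (rule pres_X[where f = "hmap \<sigma>" and n = n]) (use mon_hv.h B_X n(1) F bk irr in auto)
  show ?thesis using n(1,3) F irrF pw p by simp
qed


lemma branchB:
  assumes pB: "p \<in> Bset \<sigma>" and irr: "sigma_irrational \<sigma> p"
  shows "Fmap \<sigma> p \<in> Aset \<sigma> \<and> sigma_irrational \<sigma> (Fmap \<sigma> p) \<and> fst (Fmap \<sigma> p) = fst p \<and> \<bar>snd (Fmap \<sigma> p)\<bar> \<le> \<bar>snd p\<bar> / 2"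
proof -
  obtain a b where p: "p = (a,b)" by (cases p)
  have a0: "a \<noteq> 0" using irr_axes irr p by blast
  have Bc: "(0 < a \<and> \<sigma> a \<le> b) \<or> (a < 0 \<and> b \<le> \<sigma> a)" using pB unfolding p B_char .
  define e where "e = \<sigma> a"
  have pw: "\<And>k. (vinv \<sigma> ^^ k) p = (a, b - real k * e)" using p vinv_pow e_def by simp
  have "\<exists>n. (vinv \<sigma> ^^ n) p \<in> Aset \<sigma> \<and> (\<forall>k<n. (vinv \<sigma> ^^ k) p \<notin> Aset \<sigma>) \<and> \<bar>b - real n * e\<bar> \<le> \<bar>b\<bar> / 2"
  proof (cases "a > 0")
    case True
    have e0: "0 < e" using True spos e_def by simp
    have eb: "e \<le> b" using Bc True e_def by linarith
    obtain n where n: "n \<ge> 1" "0 \<le> b - real n * e" "b - real n * e < e" "b - real n * e \<le> b - e"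
        "\<forall>k<n. e \<le> b - real k * e" using euclid_lt[OF e0 eb] by blast
    show ?thesis
    proof (intro exI conjI allI impI)
      show "(vinv \<sigma> ^^ n) p \<in> Aset \<sigma>" unfolding pw A_char using n(2,3) e_def by blast
      show "(vinv \<sigma> ^^ k) p \<notin> Aset \<sigma>" if "k < n" for k
      proof -
        have k: "e \<le> b - real k * e" using n(5) that by blast
        then show ?thesis unfolding pw A_char using e0 e_def by linarith
      qed
      show "\<bar>b - real n * e\<bar> \<le> \<bar>b\<bar> / 2" using n(2,3,4) eb e0 by linarith
    qed
  next
    case False
    with a0 have an: "a < 0" by simp
    have e0: "0 < - e" using an sneg e_def by simp
    have eb: "- e \<le> - b" using Bc an e_def by linarith
    obtain n where n: "n \<ge> 1" "0 \<le> - b - real n * - e" "- b - real n * - e < - e" "- b - real n * - e \<le> - b - - e"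
        "\<forall>k<n. - e \<le> - b - real k * - e" using euclid_lt[OF e0 eb] by blast
    define t where "t = - b - real n * - e"
    have tn: "b - real n * e = - t" unfolding t_def by simp
    have t: "0 \<le> t" "t < - e" "t \<le> - b - - e" using n(2,3,4) unfolding t_def by blast+
    show ?thesis
    proof (intro exI conjI allI impI)
      show "(vinv \<sigma> ^^ n) p \<in> Aset \<sigma>" unfolding pw A_char tn using t e_def by simp
      show "(vinv \<sigma> ^^ k) p \<notin> Aset \<sigma>" if "k < n" for k
      proof -
        have "- e \<le> - b - real k * - e" using n(5) that by blast
        then have k: "b - real k * e \<le> e" by simp
        then show ?thesis unfolding pw A_char using e0 e_def by linarith
      qed
      show "\<bar>b - real n * e\<bar> \<le> \<bar>b\<bar> / 2" unfolding tn using t eb e0 by linarith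
    qed
  qed
  then obtain n where n: "(vinv \<sigma> ^^ n) p \<in> Aset \<sigma>" "\<And>k. k < n \<Longrightarrow> (vinv \<sigma> ^^ k) p \<notin> Aset \<sigma>"
    "\<bar>b - real n * e\<bar> \<le> \<bar>b\<bar> / 2" by blast
  have L: "(LEAST k. (vinv \<sigma> ^^ k) p \<in> Aset \<sigma>) = n" by (rule least_eq) (use n in auto)
  have nA: "p \<notin> Aset \<sigma>" using AB_disj pB by blast
  have F: "Fmap \<sigma> p = (vinv \<sigma> ^^ n) p" unfolding Fmap_def L using pB nA by simp
  have "(vmap \<sigma> ^^ n) (a, b - real n * e) = (a, b)" by (simp add: vmap_pow e_def)
  then have bk: "(vmap \<sigma> ^^ n) (Fmap \<sigma> p) = p" using F pw p by simp
  have irrF: "sigma_irrational \<sigma> (Fmap \<sigma> p)"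
    by (rule pres_X[where f = "vmap \<sigma>" and n = n]) (use mon_hv.v A_X n(1) F bk irr in auto)
  show ?thesis using n(1,3) F irrF pw p by simp
qed

lemma branchC:
  assumes pC: "p \<in> Cset \<sigma>" and irr: "sigma_irrational \<sigma> p"
  shows "Fmap \<sigma> p \<in> Dset \<sigma> \<and> sigma_irrational \<sigma> (Fmap \<sigma> p) \<and> snd (Fmap \<sigma> p) = snd p \<and> \<bar>fst (Fmap \<sigma> p)\<bar> \<le> \<bar>fst p\<bar> / 2"
proof -
  obtain a b where p: "p = (a,b)" by (cases p)
  have b0: "b \<noteq> 0" using irr_axes irr p by blast
  have Cc: "(0 < b \<and> b \<le> - \<sigma> a) \<or> (- \<sigma> a \<le> b \<and> b < 0)" using pC unfolding p C_char .
  define d where "d = inv \<sigma> b"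
  have sd: "\<sigma> d = b" unfolding d_def by (rule inv1)
  have pw: "\<And>k. (hmap \<sigma> ^^ k) p = (a + real k * d, b)" using p hmap_pow d_def by simp
  have "\<exists>n. (hmap \<sigma> ^^ n) p \<in> Dset \<sigma> \<and> (\<forall>k<n. (hmap \<sigma> ^^ k) p \<notin> Dset \<sigma>) \<and> \<bar>a + real n * d\<bar> \<le> \<bar>a\<bar> / 2"
  proof (cases "b > 0")
    case True
    have d0: "0 < d" using True ipos d_def by simp
    have "\<sigma> d \<le> \<sigma> (- a)" using Cc True sd odd[of a] by linarith
    then have da: "d \<le> - a" using sle by blast
    obtain n where n: "n \<ge> 1" "0 \<le> - a - real n * d" "- a - real n * d < d" "- a - real n * d \<le> - a - d"
        "\<forall>k<n. d \<le> - a - real k * d" using euclid_lt[OF d0 da] by blast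
    show ?thesis
    proof (intro exI conjI allI impI)
      have "\<sigma> (- a - real n * d) < b" using n(3) sless sd by metis
      moreover have "\<sigma> (- a - real n * d) = - \<sigma> (a + real n * d)" using odd[of "a + real n * d"] by simp
      ultimately show "(hmap \<sigma> ^^ n) p \<in> Dset \<sigma>" unfolding pw D_char using n(2) by simp
      show "(hmap \<sigma> ^^ k) p \<notin> Dset \<sigma>" if "k < n" for k
      proof -
        have k: "d \<le> - a - real k * d" using n(5) that by blast
        then have "b \<le> \<sigma> (- a - real k * d)" using sle sd by metis
        moreover have "\<sigma> (- a - real k * d) = - \<sigma> (a + real k * d)" using odd[of "a + real k * d"] by simp
        ultimately show ?thesis unfolding pw D_char using k d0 by linarith
      qed
      show "\<bar>a + real n * d\<bar> \<le> \<bar>a\<bar> / 2" using n(2,3,4) da d0 by linarith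
    qed
  next
    case False
    with b0 have bn: "b < 0" by simp
    have d0: "0 < - d" using bn ineg d_def by simp
    have "\<sigma> (- a) \<le> \<sigma> d" using Cc bn sd odd[of a] by linarith
    then have da: "- d \<le> a" using sle by fastforce
    obtain n where n: "n \<ge> 1" "0 \<le> a - real n * - d" "a - real n * - d < - d" "a - real n * - d \<le> a - - d"
        "\<forall>k<n. - d \<le> a - real k * - d" using euclid_lt[OF d0 da] by blast
    define t where "t = a - real n * - d"
    have tn: "a + real n * d = t" unfolding t_def by simp
    have t: "0 \<le> t" "t < - d" "t \<le> a - - d" using n(2,3,4) unfolding t_def by blast+
    have sdm: "\<sigma> (- d) = - b" using odd[of d] sd by simp
    show ?thesis
    proof (intro exI conjI allI impI)
      have "\<sigma> t < \<sigma> (- d)" using t(2) sless by blast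
      then show "(hmap \<sigma> ^^ n) p \<in> Dset \<sigma>" unfolding pw D_char tn using t sdm by simp
      show "(hmap \<sigma> ^^ k) p \<notin> Dset \<sigma>" if "k < n" for k
      proof -
        have "- d \<le> a - real k * - d" using n(5) that by blast
        then have k: "- d \<le> a + real k * d" by simp
        then have "\<sigma> (- d) \<le> \<sigma> (a + real k * d)" using sle by blast
        then show ?thesis unfolding pw D_char using k d0 sdm by linarith
      qed
      show "\<bar>a + real n * d\<bar> \<le> \<bar>a\<bar> / 2" unfolding tn using t da d0 by linarith
    qed
  qed
  then obtain n where n: "(hmap \<sigma> ^^ n) p \<in> Dset \<sigma>" "\<And>k. k < n \<Longrightarrow> (hmap \<sigma> ^^ k) p \<notin> Dset \<sigma>"
    "\<bar>a + real n * d\<bar> \<le> \<bar>a\<bar> / 2" by blast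
  have L: "(LEAST k. (hmap \<sigma> ^^ k) p \<in> Dset \<sigma>) = n" by (rule least_eq) (use n in auto)
  have nA: "p \<notin> Aset \<sigma>" "p \<notin> Bset \<sigma>" using C_Y A_X B_X XY_disj pC by blast+
  have F: "Fmap \<sigma> p = (hmap \<sigma> ^^ n) p" unfolding Fmap_def L using pC nA by simp
  have "(hinv \<sigma> ^^ n) (a + real n * d, b) = (a, b)" by (simp add: hinv_pow d_def)
  then have bk: "(hinv \<sigma> ^^ n) (Fmap \<sigma> p) = p" using F pw p by simp
  have irrF: "sigma_irrational \<sigma> (Fmap \<sigma> p)"
    by (rule pres_Y[where f = "hinv \<sigma>" and n = n]) (use mon_hv_inv.h D_Y n(1) F bk irr in auto)
  show ?thesis using n(1,3) F irrF pw p by simp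
qed

lemma branchD:
  assumes pD: "p \<in> Dset \<sigma>" and irr: "sigma_irrational \<sigma> p"
  shows "Fmap \<sigma> p \<in> Cset \<sigma> \<and> sigma_irrational \<sigma> (Fmap \<sigma> p) \<and> fst (Fmap \<sigma> p) = fst p \<and> \<bar>snd (Fmap \<sigma> p)\<bar> \<le> \<bar>snd p\<bar> / 2"
proof -
  obtain a b where p: "p = (a,b)" by (cases p)
  have a0: "a \<noteq> 0" using irr_axes irr p by blast
  have Dc: "(a \<le> 0 \<and> - \<sigma> a < b) \<or> (0 \<le> a \<and> b < - \<sigma> a)" using pD unfolding p D_char .
  define e where "e = \<sigma> a"
  have pw: "\<And>k. (vmap \<sigma> ^^ k) p = (a, b + real k * e)" using p vmap_pow e_def by simp
  have "\<exists>n. (vmap \<sigma> ^^ n) p \<in> Cset \<sigma> \<and> (\<forall>k<n. (vmap \<sigma> ^^ k) p \<notin> Cset \<sigma>) \<and> \<bar>b + real n * e\<bar> \<le> \<bar>b\<bar> / 2"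
  proof (cases "a < 0")
    case True
    have e0: "0 < - e" using True sneg e_def by simp
    have eb: "- e < b" using Dc True e_def by linarith
    obtain n where n: "n \<ge> 1" "0 < b - real n * - e" "b - real n * - e \<le> - e" "b - real n * - e \<le> b - - e"
        "\<forall>k<n. - e < b - real k * - e" using euclid_le[OF e0 eb] by blast
    define t where "t = b - real n * - e"
    have tn: "b + real n * e = t" unfolding t_def by simp
    have t: "0 < t" "t \<le> - e" "t \<le> b - - e" using n(2,3,4) unfolding t_def by blast+
    show ?thesis
    proof (intro exI conjI allI impI)
      show "(vmap \<sigma> ^^ n) p \<in> Cset \<sigma>" unfolding pw C_char tn using t e_def by simp
      show "(vmap \<sigma> ^^ k) p \<notin> Cset \<sigma>" if "k < n" for k
      proof -
        have "- e < b - real k * - e" using n(5) that by blast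
        then have k: "- e < b + real k * e" by simp
        then show ?thesis unfolding pw C_char using e0 e_def by linarith
      qed
      show "\<bar>b + real n * e\<bar> \<le> \<bar>b\<bar> / 2" unfolding tn using t eb e0 by linarith
    qed
  next
    case False
    with a0 have ap: "0 < a" by simp
    have e0: "0 < e" using ap spos e_def by simp
    have eb: "e < - b" using Dc ap e_def by linarith
    obtain n where n: "n \<ge> 1" "0 < - b - real n * e" "- b - real n * e \<le> e" "- b - real n * e \<le> - b - e"
        "\<forall>k<n. e < - b - real k * e" using euclid_le[OF e0 eb] by blast
    define t where "t = - b - real n * e"
    have tn: "b + real n * e = - t" unfolding t_def by simp
    have t: "0 < t" "t \<le> e" "t \<le> - b - e" using n(2,3,4) unfolding t_def by blast+
    show ?thesis
    proof (intro exI conjI allI impI)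
      show "(vmap \<sigma> ^^ n) p \<in> Cset \<sigma>" unfolding pw C_char tn using t e_def by simp
      show "(vmap \<sigma> ^^ k) p \<notin> Cset \<sigma>" if "k < n" for k
      proof -
        have "e < - b - real k * e" using n(5) that by blast
        then have k: "b + real k * e < - e" by simp
        then show ?thesis unfolding pw C_char using e0 e_def by linarith
      qed
      show "\<bar>b + real n * e\<bar> \<le> \<bar>b\<bar> / 2" unfolding tn using t eb e0 by linarith
    qed
  qed
  then obtain n where n: "(vmap \<sigma> ^^ n) p \<in> Cset \<sigma>" "\<And>k. k < n \<Longrightarrow> (vmap \<sigma> ^^ k) p \<notin> Cset \<sigma>"
    "\<bar>b + real n * e\<bar> \<le> \<bar>b\<bar> / 2" by blast
  have L: "(LEAST k. (vmap \<sigma> ^^ k) p \<in> Cset \<sigma>) = n" by (rule least_eq) (use n in auto)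
  have nA: "p \<notin> Aset \<sigma>" "p \<notin> Bset \<sigma>" "p \<notin> Cset \<sigma>" using D_Y A_X B_X XY_disj CD_disj pD by blast+
  have F: "Fmap \<sigma> p = (vmap \<sigma> ^^ n) p" unfolding Fmap_def L using pD nA by simp
  have "(vinv \<sigma> ^^ n) (a, b + real n * e) = (a, b)" by (simp add: vinv_pow e_def)
  then have bk: "(vinv \<sigma> ^^ n) (Fmap \<sigma> p) = p" using F pw p by simp
  have irrF: "sigma_irrational \<sigma> (Fmap \<sigma> p)"
    by (rule pres_Y[where f = "vinv \<sigma>" and n = n]) (use mon_hv_inv.v C_Y n(1) F bk irr in auto)
  show ?thesis using n(1,3) F irrF pw p by simp
qed

end



lemma lin_aux1: fixes x y f s p q :: real shows "x = f \<Longrightarrow> s = q \<Longrightarrow> f \<le> p / 2 \<Longrightarrow> y \<le> s / 2 \<Longrightarrow> x + y \<le> (p + q) / 2"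
  by simp
lemma lin_aux2: fixes x y f s p q :: real shows "y = f \<Longrightarrow> s = p \<Longrightarrow> f \<le> q / 2 \<Longrightarrow> x \<le> s / 2 \<Longrightarrow> x + y \<le> (p + q) / 2"
  by simp
context sig begin

lemma cover:
  assumes irr: "sigma_irrational \<sigma> p"
  shows "p \<in> Aset \<sigma> \<or> p \<in> Bset \<sigma> \<or> p \<in> Cset \<sigma> \<or> p \<in> Dset \<sigma>"
proof -
  obtain a b where p: "p = (a,b)" by (cases p)
  have a0: "a \<noteq> 0" and b0: "b \<noteq> 0" using irr_axes irr p by blast+
  have s: "0 < a \<Longrightarrow> 0 < \<sigma> a" "a < 0 \<Longrightarrow> \<sigma> a < 0" using sgn_facts by blast+
  have "((0 \<le> b \<and> b < \<sigma> a) \<or> (\<sigma> a < b \<and> b \<le> 0)) \<or> ((0 < a \<and> \<sigma> a \<le> b) \<or> (a < 0 \<and> b \<le> \<sigma> a))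
    \<or> ((0 < b \<and> b \<le> - \<sigma> a) \<or> (- \<sigma> a \<le> b \<and> b < 0)) \<or> ((a \<le> 0 \<and> - \<sigma> a < b) \<or> (0 \<le> a \<and> b < - \<sigma> a))"
    using a0 b0 s by linarith
  then show ?thesis unfolding p A_char B_char C_char D_char .
qed

lemma U_step:
  assumes irr: "sigma_irrational \<sigma> p"
  shows "sigma_irrational \<sigma> (Fmap \<sigma> (Fmap \<sigma> p)) \<and> norm1 (Fmap \<sigma> (Fmap \<sigma> p)) \<le> norm1 p / 2"
  using cover[OF irr]
proof (elim disjE)
  assume h: "p \<in> Aset \<sigma>"
  note 1 = branchA[OF h irr]
  note 2 = branchB[OF 1[THEN conjunct1] 1[THEN conjunct2, THEN conjunct1]]
  have a: "\<bar>fst (Fmap \<sigma> (Fmap \<sigma> p))\<bar> = \<bar>fst (Fmap \<sigma> p)\<bar>" using 2 by simp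
  have b: "\<bar>snd (Fmap \<sigma> p)\<bar> = \<bar>snd p\<bar>" using 1 by simp
  have i: "sigma_irrational \<sigma> (Fmap \<sigma> (Fmap \<sigma> p))" using 2 by blast
  have f1: "\<bar>fst (Fmap \<sigma> p)\<bar> \<le> \<bar>fst p\<bar> / 2" using 1 by blast
  have f2: "\<bar>snd (Fmap \<sigma> (Fmap \<sigma> p))\<bar> \<le> \<bar>snd (Fmap \<sigma> p)\<bar> / 2" using 2 by blast
  have "norm1 (Fmap \<sigma> (Fmap \<sigma> p)) \<le> norm1 p / 2" unfolding norm1_eq by (rule lin_aux1[OF a b f1 f2])
  then show ?thesis using i by blast
next
  assume h: "p \<in> Bset \<sigma>"
  note 1 = branchB[OF h irr]
  note 2 = branchA[OF 1[THEN conjunct1] 1[THEN conjunct2, THEN conjunct1]]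
  have a: "\<bar>snd (Fmap \<sigma> (Fmap \<sigma> p))\<bar> = \<bar>snd (Fmap \<sigma> p)\<bar>" using 2 by simp
  have b: "\<bar>fst (Fmap \<sigma> p)\<bar> = \<bar>fst p\<bar>" using 1 by simp
  have i: "sigma_irrational \<sigma> (Fmap \<sigma> (Fmap \<sigma> p))" using 2 by blast
  have f1: "\<bar>snd (Fmap \<sigma> p)\<bar> \<le> \<bar>snd p\<bar> / 2" using 1 by blast
  have f2: "\<bar>fst (Fmap \<sigma> (Fmap \<sigma> p))\<bar> \<le> \<bar>fst (Fmap \<sigma> p)\<bar> / 2" using 2 by blast
  have "norm1 (Fmap \<sigma> (Fmap \<sigma> p)) \<le> norm1 p / 2" unfolding norm1_eq by (rule lin_aux2[OF a b f1 f2])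
  then show ?thesis using i by blast
next
  assume h: "p \<in> Cset \<sigma>"
  note 1 = branchC[OF h irr]
  note 2 = branchD[OF 1[THEN conjunct1] 1[THEN conjunct2, THEN conjunct1]]
  have a: "\<bar>fst (Fmap \<sigma> (Fmap \<sigma> p))\<bar> = \<bar>fst (Fmap \<sigma> p)\<bar>" using 2 by simp
  have b: "\<bar>snd (Fmap \<sigma> p)\<bar> = \<bar>snd p\<bar>" using 1 by simp
  have i: "sigma_irrational \<sigma> (Fmap \<sigma> (Fmap \<sigma> p))" using 2 by blast
  have f1: "\<bar>fst (Fmap \<sigma> p)\<bar> \<le> \<bar>fst p\<bar> / 2" using 1 by blast
  have f2: "\<bar>snd (Fmap \<sigma> (Fmap \<sigma> p))\<bar> \<le> \<bar>snd (Fmap \<sigma> p)\<bar> / 2" using 2 by blast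
  have "norm1 (Fmap \<sigma> (Fmap \<sigma> p)) \<le> norm1 p / 2" unfolding norm1_eq by (rule lin_aux1[OF a b f1 f2])
  then show ?thesis using i by blast
next
  assume h: "p \<in> Dset \<sigma>"
  note 1 = branchD[OF h irr]
  note 2 = branchC[OF 1[THEN conjunct1] 1[THEN conjunct2, THEN conjunct1]]
  have a: "\<bar>snd (Fmap \<sigma> (Fmap \<sigma> p))\<bar> = \<bar>snd (Fmap \<sigma> p)\<bar>" using 2 by simp
  have b: "\<bar>fst (Fmap \<sigma> p)\<bar> = \<bar>fst p\<bar>" using 1 by simp
  have i: "sigma_irrational \<sigma> (Fmap \<sigma> (Fmap \<sigma> p))" using 2 by blast
  have f1: "\<bar>snd (Fmap \<sigma> p)\<bar> \<le> \<bar>snd p\<bar> / 2" using 1 by blast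
  have f2: "\<bar>fst (Fmap \<sigma> (Fmap \<sigma> p))\<bar> \<le> \<bar>fst (Fmap \<sigma> p)\<bar> / 2" using 2 by blast
  have "norm1 (Fmap \<sigma> (Fmap \<sigma> p)) \<le> norm1 p / 2" unfolding norm1_eq by (rule lin_aux2[OF a b f1 f2])
  then show ?thesis using i by blast
qed

end

theorem lemma3:
  fixes \<sigma> :: "real \<Rightarrow> real" and p :: "real \<times> real" and n :: nat
  assumes "strict_mono \<sigma>"
    and "\<And>x. \<sigma> (- x) = - \<sigma> x"
    and "bij \<sigma>" and "continuous_on UNIV \<sigma>" and "continuous_on UNIV (inv \<sigma>)"
    and "p \<in> Omega" and "sigma_irrational \<sigma> p"
  shows "norm1 (((Fmap \<sigma> \<circ> Fmap \<sigma>) ^^ n) p) \<le> norm1 p / 2 ^ n"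
proof -
  interpret sig \<sigma> using assms(1-3) by unfold_locales
  have "sigma_irrational \<sigma> (((Fmap \<sigma> \<circ> Fmap \<sigma>) ^^ n) p) \<and> norm1 (((Fmap \<sigma> \<circ> Fmap \<sigma>) ^^ n) p) \<le> norm1 p / 2 ^ n"
  proof (induction n)
    case 0
    then show ?case using assms(7) by simp
  next
    case (Suc n)
    let ?q = "((Fmap \<sigma> \<circ> Fmap \<sigma>) ^^ n) p"
    have e: "((Fmap \<sigma> \<circ> Fmap \<sigma>) ^^ Suc n) p = Fmap \<sigma> (Fmap \<sigma> ?q)" by simp
    have u: "sigma_irrational \<sigma> (Fmap \<sigma> (Fmap \<sigma> ?q)) \<and> norm1 (Fmap \<sigma> (Fmap \<sigma> ?q)) \<le> norm1 ?q / 2"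
      using U_step Suc.IH by blast
    have "norm1 ?q / 2 \<le> (norm1 p / 2 ^ n) / 2" by (rule divide_right_mono) (use Suc.IH in blast, simp)
    also have "\<dots> = norm1 p / 2 ^ Suc n" by simp
    finally show ?case unfolding e using u by simp
  qed
  then show ?thesis by blast
qed


end
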